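(* Let $q=2^m$ with $m\ge 4$ even. Let $\bar{\mathbb D}$ be the incidence structure with point set $U_{q+1}$ whose blocks are the sets $U_{q+1}\setminus B$ for $B\in \mathcal B_{q-4}(\mathrm{Tr}_{q^2/q}(\mathcal C_{\{3,5\}}))$. Then $\bar{\mathbb D}$ is isomorphic to the Witt spherical geometry design with parameters $3$-$(2^m+1,5,1)$, namely the design with point set $\mathrm{PG}(1,2^m)$ whose blocks are the images of the $5$-set $\mathrm{PG}(1,4)=\mathrm{GF}(4)\cup\{\infty\}$ under $\mathrm{PGL}_2(\mathrm{GF}(2^m))$.
   Context: $U_{q+1}$ is the set of $(q+1)$-th roots of unity in $\mathrm{GF}(q^2)$; coordinates are indexed by $U_{q+1}$. $\mathcal C_{\{3,5\}}=\{(a_3u^3+a_{q-2}u^{q-2}+a_5u^5+a_{q-4}u^{q-4})_{u\in U_{q+1}}: a_i\in\mathrm{GF}(q^2)\}$; $\mathrm{Tr}_{q^2/q}(\mathcal C)$ is obtained by applying $x\mapsto x+x^q$ coordinatewise. $\mathcal B_w(\mathcal C)$ is the set of supports of codewords of Hamming weight $w$. $\mathrm{GF}(4)\subseteq\mathrm{GF}(2^m)$ since $m$ is even, and $\mathrm{PGL}_2(\mathrm{GF}(2^m))$ acts on $\mathrm{PG}(1,2^m)=\mathrm{GF}(2^m)\cup\{\infty\}$ by linear fractional transformations. Two incidence structures are isomorphic if there is a bijection of point sets mapping the block set of one onto the block set of the other. *)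

theory Defs
  imports Main
begin

text \<open>The ambient field GF(q^2), q = 2^m, is modelled by an arbitrary finite field type
  'a of cardinality q^2 (unique up to isomorphism). GF(q) inside it is the set of x with x^q = x.\<close>

definition Uroots :: "nat \<Rightarrow> 'a::field set" where
  "Uroots q = {u. u ^ (q + 1) = 1}"

definition subfield_of :: "nat \<Rightarrow> 'a::field set" where
  "subfield_of k = {x. x ^ k = x}"

definition trace :: "nat \<Rightarrow> 'a::field \<Rightarrow> 'a" where
  "trace q x = x + x ^ q"

text \<open>Codewords of Tr(C_{3,5}), as functions evaluated at the coordinates u in U_{q+1}.\<close>
definition trace_code35 :: "nat \<Rightarrow> ('a::field \<Rightarrow> 'a) set" where
  "trace_code35 q = {c. \<exists>a3 aq2 a5 aq4. c = (\<lambda>u. trace q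
      (a3 * u ^ 3 + aq2 * u ^ (q - 2) + a5 * u ^ 5 + aq4 * u ^ (q - 4)))}"

definition supp_on :: "'a set \<Rightarrow> ('a \<Rightarrow> 'a::field) \<Rightarrow> 'a set" where
  "supp_on P c = {u \<in> P. c u \<noteq> 0}"

definition blocks_w :: "nat \<Rightarrow> nat \<Rightarrow> 'a::field set set" where
  "blocks_w q w = {supp_on (Uroots q) c | c. c \<in> trace_code35 q \<and> card (supp_on (Uroots q) c) = w}"

text \<open>Projective line PG(1,k) over the subfield GF(k): None is the point at infinity.\<close>
definition PG1 :: "nat \<Rightarrow> 'a::field option set" where
  "PG1 k = insert None (Some ` subfield_of k)"

definition pgl2 :: "nat \<Rightarrow> ('a::field \<times> 'a \<times> 'a \<times> 'a) set" where
  "pgl2 q = {(a, b, c, d). a \<in> subfield_of q \<and> b \<in> subfield_of q \<and> c \<in> subfield_of q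
      \<and> d \<in> subfield_of q \<and> a * d - b * c \<noteq> 0}"

fun moebius :: "'a::field \<times> 'a \<times> 'a \<times> 'a \<Rightarrow> 'a option \<Rightarrow> 'a option" where
  "moebius (a, b, c, d) None = (if c = 0 then None else Some (a / c))"
| "moebius (a, b, c, d) (Some z) =
     (if c * z + d = 0 then None else Some ((a * z + b) / (c * z + d)))"

definition witt_blocks :: "nat \<Rightarrow> 'a::field option set set" where
  "witt_blocks q = {moebius g ` PG1 4 | g. g \<in> pgl2 q}"

definition inc_isomorphic :: "'p set \<Rightarrow> 'p set set \<Rightarrow> 'r set \<Rightarrow> 'r set set \<Rightarrow> bool" where
  "inc_isomorphic P1 B1 P2 B2 = (\<exists>f. bij_betw f P1 P2 \<and> (\<lambda>B. f ` B) ` B1 = B2)"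

end

theory Submission
  imports Defs "HOL-Number_Theory.Number_Theory" "HOL-Computational_Algebra.Polynomial"
begin
lemma char2_of_card:
  assumes "card (UNIV :: 'a::{field,finite} set) = 2 ^ k" "k \<ge> 1"
  shows "(2::'a) = 0"
proof -
  have pos: "CHAR('a) > 0" by (rule finite_imp_CHAR_pos) simp
  have pr: "prime CHAR('a)" using prime_CHAR_semidom[OF pos] .
  have "CHAR('a) dvd 2 ^ k" using CHAR_dvd_CARD[where 'a='a] assms(1) by simp
  hence "CHAR('a) dvd 2" using pr prime_dvd_power by blast
  hence "CHAR('a) = 2" using pr by (metis primes_dvd_imp_eq two_is_prime_nat)
  hence "of_nat 2 = (0::'a)" using of_nat_eq_0_iff_char_dvd[of 2, where 'a='a] by simp
  thus ?thesis by simp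
qed

lemma pow_card_same:
  fixes x :: "'a :: {field,finite}"
  shows "x ^ card (UNIV :: 'a set) = x"
proof (cases "x = 0")
  case False
  have "x * (\<Prod>y\<in>UNIV-{0}. x * y) = x * x ^ (card (UNIV :: 'a set) - 1) * \<Prod>(UNIV-{0})"
    by (simp add: prod.distrib mult_ac)
  also have "x * x ^ (card (UNIV :: 'a set) - 1) = x ^ Suc (card (UNIV :: 'a set) - 1)"
    by (subst power_Suc) auto
  also have "Suc (card (UNIV :: 'a set) - 1) = card (UNIV :: 'a set)"
    using finite_UNIV_card_ge_0[where ?'a = 'a] by simp
  also have "(\<Prod>y\<in>UNIV-{0}. x * y) = (\<Prod>y\<in>UNIV-{0}. y)"
    by (rule prod.reindex_bij_witness[of _ "\<lambda>y. y / x" "\<lambda>y. x * y"]) (use False in auto)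
  finally show ?thesis
    by simp
qed (use finite_UNIV_card_ge_0[where ?'a = 'a] in auto)

lemma frob2:
  fixes x y :: "'a::field"
  assumes "(2::'a) = 0"
  shows "(x + y) ^ 2 = x ^ 2 + y ^ 2"
proof -
  have "(x + y) ^ 2 = x^2 + y^2 + 2 * x * y" by (simp add: power2_eq_square algebra_simps)
  thus ?thesis using assms by simp
qed

lemma frob:
  fixes x y :: "'a::field"
  assumes "(2::'a) = 0"
  shows "(x + y) ^ (2 ^ k) = x ^ (2 ^ k) + y ^ (2 ^ k)"
proof (induction k)
  case 0 then show ?case by simp
next
  case (Suc k)
  have "(x + y) ^ (2 ^ Suc k) = ((x + y) ^ (2 ^ k)) ^ 2" by (simp add: power_mult[symmetric] mult.commute)
  also have "\<dots> = (x ^ (2 ^ k)) ^ 2 + (y ^ (2 ^ k)) ^ 2" using Suc frob2[OF assms] by simp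
  also have "\<dots> = x ^ (2 ^ Suc k) + y ^ (2 ^ Suc k)" by (simp add: power_mult[symmetric] mult.commute)
  finally show ?case .
qed

lemma card_roots_pow_le:
  fixes c :: "'a::field"
  assumes "n \<ge> 2"
  shows "card {x::'a. x ^ n + x = c} \<le> n"
proof -
  define p where "p = monom (1::'a) n + [:- c, 1:]"
  have dp: "degree p = n" unfolding p_def using assms
    by (subst degree_add_eq_left) (auto simp: degree_monom_eq)
  have "p \<noteq> 0" using dp assms by auto
  hence "card {x. poly p x = 0} \<le> n" using card_poly_roots_bound dp by metis
  moreover have "{x. poly p x = 0} = {x::'a. x ^ n + x = c}"
    unfolding p_def by (auto simp: poly_monom algebra_simps)
  ultimately show ?thesis by simp
qed

lemma card_roots_one_le:
  assumes "n \<ge> 1"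
  shows "card {x::'a::field. x ^ n = 1} \<le> n"
proof -
  define p where "p = monom (1::'a) n + [:- 1:]"
  have dp: "degree p = n" unfolding p_def using assms
    by (subst degree_add_eq_left) (auto simp: degree_monom_eq)
  have "p \<noteq> 0" using dp assms by auto
  hence "card {x. poly p x = 0} \<le> n" using card_poly_roots_bound dp by metis
  moreover have "{x. poly p x = 0} = {x::'a. x ^ n = 1}"
    unfolding p_def by (auto simp: poly_monom algebra_simps)
  ultimately show ?thesis by simp
qed

lemma three_dvd: "(3::nat) dvd 4 ^ n - 1"
proof (induction n)
  case 0 then show ?case by simp
next
  case (Suc n)
  have "(4::nat) ^ Suc n - 1 = 4 * (4 ^ n - 1) + 3"
  proof -
    have "(1::nat) \<le> 4^n" by simp
    thus ?thesis by (simp add: diff_mult_distrib2)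
  qed
  thus ?case using Suc by simp
qed

fun Hf :: "'a::field \<times> 'a \<times> 'a \<times> 'a \<Rightarrow> 'a \<times> 'a \<Rightarrow> 'a" where
  "Hf (A, B, C, D) (X, Y) = A * X ^ 5 + B * X ^ 4 * Y + C * X * Y ^ 4 + D * Y ^ 5"

fun act :: "'a::field \<times> 'a \<times> 'a \<times> 'a \<Rightarrow> 'a \<times> 'a \<Rightarrow> 'a \<times> 'a" where
  "act (a, b, c, d) (X, Y) = (a * X + b * Y, c * X + d * Y)"

fun cmpF :: "'a::field \<times> 'a \<times> 'a \<times> 'a \<Rightarrow> 'a \<times> 'a \<times> 'a \<times> 'a \<Rightarrow> 'a \<times> 'a \<times> 'a \<times> 'a" where
  "cmpF (A, B, C, D) (a, b, c, d) =
    (A * a^5 + B * a^4 * c + C * a * c^4 + D * c^5,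
     A * a^4 * b + B * a^4 * d + C * b * c^4 + D * c^4 * d,
     A * a * b^4 + B * b^4 * c + C * a * d^4 + D * c * d^4,
     A * b^5 + B * b^4 * d + C * b * d^4 + D * d^5)"

lemma fr4:
  fixes x y :: "'a::field"
  assumes "(2::'a) = 0"
  shows "(x + y) ^ 4 = x ^ 4 + y ^ 4"
  using frob[OF assms, of x y 2] by simp

lemma p5: "(z::'a::field) ^ 5 = z ^ 4 * z"
  by (simp add: numeral_eq_Suc)

lemma H_comp:
  fixes F g :: "'a::field \<times> 'a \<times> 'a \<times> 'a"
  assumes "(2::'a) = 0"
  shows "Hf (cmpF F g) v = Hf F (act g v)"
proof -
  obtain A B C D where F: "F = (A,B,C,D)" by (cases F) auto
  obtain a b c d where g: "g = (a,b,c,d)" by (cases g) auto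
  obtain X Y where v: "v = (X,Y)" by (cases v) auto
  show ?thesis unfolding F g v
    apply (simp only: Hf.simps act.simps cmpF.simps p5 fr4[OF assms] power_mult_distrib)
    by (simp add: algebra_simps)
qed

definition pt :: "'a::field \<times> 'a \<Rightarrow> 'a option" where
  "pt v = (if snd v = 0 then None else Some (fst v / snd v))"

fun rep :: "'a::field option \<Rightarrow> 'a \<times> 'a" where
  "rep None = (1, 0)"
| "rep (Some x) = (x, 1)"

definition vanish :: "'a::field \<times> 'a \<times> 'a \<times> 'a \<Rightarrow> 'a option \<Rightarrow> bool" where
  "vanish F p = (Hf F (rep p) = 0)"

definition sc :: "'a::field \<Rightarrow> 'a \<times> 'a \<Rightarrow> 'a \<times> 'a" where
  "sc l v = (l * fst v, l * snd v)"

fun det :: "'a::field \<times> 'a \<times> 'a \<times> 'a \<Rightarrow> 'a" where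
  "det (a, b, c, d) = a * d - b * c"

fun ginv :: "'a::field \<times> 'a \<times> 'a \<times> 'a \<Rightarrow> 'a \<times> 'a \<times> 'a \<times> 'a" where
  "ginv (a, b, c, d) = (d, - b, - c, a)"

lemma Hf_sc: "Hf F (sc l v) = l ^ 5 * Hf F v"
  by (cases F; cases v) (simp add: sc_def algebra_simps power_mult_distrib p5)

lemma act_sc: "act g (sc l v) = sc l (act g v)"
  by (cases g; cases v) (simp add: sc_def algebra_simps)

lemma pt_sc: "l \<noteq> 0 \<Longrightarrow> pt (sc l v) = pt v"
  by (cases v) (simp add: sc_def pt_def)

lemma pt_rep[simp]: "pt (rep p) = p"
  by (cases p) (simp_all add: pt_def)

lemma rep_nz[simp]: "rep p \<noteq> (0, 0)"
  by (cases p) simp_all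

lemma rep_pt: "v \<noteq> (0,0) \<Longrightarrow> \<exists>l. l \<noteq> 0 \<and> v = sc l (rep (pt v))"
proof (cases v)
  case (Pair X Y)
  assume nz: "v \<noteq> (0,0)"
  show ?thesis
  proof (cases "Y = 0")
    case True
    then have "X \<noteq> 0" using nz Pair by auto
    then show ?thesis using True Pair by (intro exI[of _ X]) (simp add: pt_def sc_def)
  next
    case False
    then show ?thesis using Pair by (intro exI[of _ Y]) (simp add: pt_def sc_def)
  qed
qed

lemma vanish_pt:
  assumes "v \<noteq> (0,0)"
  shows "vanish F (pt v) \<longleftrightarrow> Hf F v = 0"
proof -
  obtain l where l: "l \<noteq> 0" "v = sc l (rep (pt v))" using rep_pt[OF assms] by blast
  have "Hf F v = l ^ 5 * Hf F (rep (pt v))" by (subst l(2)) (simp add: Hf_sc)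
  thus ?thesis using l(1) by (simp add: vanish_def)
qed

lemma moebius_rep: "moebius g p = pt (act g (rep p))"
  by (cases g; cases p) (simp_all add: pt_def)

lemma moebius_pt:
  assumes "v \<noteq> (0,0)"
  shows "moebius g (pt v) = pt (act g v)"
proof -
  obtain l where l: "l \<noteq> 0" "v = sc l (rep (pt v))" using rep_pt[OF assms] by blast
  have "pt (act g v) = pt (sc l (act g (rep (pt v))))" by (subst l(2)) (simp add: act_sc)
  also have "\<dots> = moebius g (pt v)" using l(1) by (simp add: pt_sc moebius_rep)
  finally show ?thesis by simp
qed

lemma act_ginv1: "act g (act (ginv g) v) = sc (det g) v"
  by (cases g; cases v) (simp add: sc_def algebra_simps)

lemma act_ginv2: "act (ginv g) (act g v) = sc (det g) v"
  by (cases g; cases v) (simp add: sc_def algebra_simps)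

lemma det_ginv: "det (ginv g) = det g"
  by (cases g) (simp add: algebra_simps)

lemma ginv_ginv: "ginv (ginv g) = g"
  by (cases g) simp

lemma act_nz:
  assumes "det g \<noteq> 0" "v \<noteq> (0,0)"
  shows "act g v \<noteq> (0,0)"
proof
  assume "act g v = (0,0)"
  hence "act (ginv g) (act g v) = (0,0)" by (cases g) simp
  hence "sc (det g) v = (0,0)" by (simp add: act_ginv2)
  thus False using assms by (cases v) (simp add: sc_def)
qed

lemma moebius_inv:
  assumes "det g \<noteq> 0"
  shows "moebius g (moebius (ginv g) p) = p"
proof -
  have nz: "act (ginv g) (rep p) \<noteq> (0,0)" using act_nz[of "ginv g"] assms by (simp add: det_ginv)
  have "moebius g (moebius (ginv g) p) = pt (act g (act (ginv g) (rep p)))"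
    by (subst moebius_rep[of "ginv g"]) (simp add: moebius_pt[OF nz])
  also have "\<dots> = p" using assms by (simp add: act_ginv1 pt_sc)
  finally show ?thesis .
qed

lemma moebius_inv2:
  assumes "det g \<noteq> 0"
  shows "moebius (ginv g) (moebius g p) = p"
  using moebius_inv[of "ginv g" p] assms by (simp add: det_ginv ginv_ginv)

lemma vanish_moebius:
  fixes F g :: "'a::field \<times> 'a \<times> 'a \<times> 'a"
  assumes "(2::'a) = 0" "det g \<noteq> 0"
  shows "vanish F (moebius g p) \<longleftrightarrow> vanish (cmpF F g) p"
proof -
  have nz: "act g (rep p) \<noteq> (0,0)" using act_nz[OF assms(2)] by simp
  show ?thesis unfolding moebius_rep vanish_pt[OF nz]
    by (simp add: vanish_def H_comp[OF assms(1)])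
qed

definition dl :: "'a::field \<times> 'a \<Rightarrow> 'a \<times> 'a \<Rightarrow> 'a" where
  "dl v w = fst v * snd w - snd v * fst w"

lemma dl_rep: "dl (rep p) (rep p') = 0 \<Longrightarrow> p = p'"
  by (cases p; cases p') (simp_all add: dl_def)

locale gf =
  fixes m :: nat and om :: "'a::{field,finite}"
  assumes cardK: "card (UNIV::'a set) = 2^(2*m)" and evm: "even m" and m4: "4 \<le> m"
    and om: "om ^ (2^m) \<noteq> om"
begin

abbreviation "q \<equiv> (2::nat)^m"

lemma two[simp]: "(2::'a) = 0" using char2_of_card[OF cardK] m4 by simp

lemma plus_self[simp]: "(x::'a) + x = 0"
proof -
  have "x + x = 2 * x" by simp
  thus ?thesis by simp
qed

lemma neg[simp]: "- (x::'a) = x"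
  by (metis add.inverse_unique plus_self)

lemma minus_eq[simp]: "(x::'a) - y = x + y"
  by (metis diff_conv_add_uminus neg)

lemma add_eq0: "(x::'a) + y = 0 \<longleftrightarrow> x = y"
  by (metis add_diff_cancel_right' minus_eq plus_self)

lemma q16: "q \<ge> 16"
proof -
  have "(2::nat)^4 \<le> 2^m" using m4 by (intro power_increasing) auto
  thus ?thesis by simp
qed

lemma cardq: "card (UNIV::'a set) = q * q"
  using cardK by (simp add: power_mult[symmetric] power2_eq_square[symmetric] mult.commute)

lemma QQ: "(x::'a) ^ (q * q) = x"
  using pow_card_same[of x] cardq by simp

lemma qq[simp]: "((x::'a) ^ q) ^ q = x"
  by (simp add: power_mult[symmetric] QQ)

lemma fq: "((x::'a) + y) ^ q = x ^ q + y ^ q"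
  using frob[OF two, of x y m] .

lemma pow_comm: "((x::'a) ^ k) ^ q = (x ^ q) ^ k"
  by (simp add: power_mult[symmetric] mult.commute)

abbreviation sub where "sub \<equiv> (subfield_of q :: 'a set)"

lemma sub_iff: "x \<in> sub \<longleftrightarrow> x ^ q = x"
  by (simp add: subfield_of_def)

lemma sub_add[intro]: "x \<in> sub \<Longrightarrow> y \<in> sub \<Longrightarrow> x + y \<in> sub"
  by (simp add: sub_iff fq)

lemma sub_mult[intro]: "x \<in> sub \<Longrightarrow> y \<in> sub \<Longrightarrow> x * y \<in> sub"
  by (simp add: sub_iff power_mult_distrib)

lemma sub_div[intro]: "x \<in> sub \<Longrightarrow> y \<in> sub \<Longrightarrow> x / y \<in> sub"
  by (simp add: sub_iff power_divide)

lemma sub_pow[intro]: "x \<in> sub \<Longrightarrow> x ^ k \<in> sub"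
  by (simp add: sub_iff pow_comm)

lemma sub_0[intro, simp]: "0 \<in> sub"
  by (simp add: sub_iff)

lemma sub_1[intro, simp]: "1 \<in> sub"
  by (simp add: sub_iff)

lemma sub_neg[intro]: "x \<in> sub \<Longrightarrow> - x \<in> sub" by simp

lemma trace_sub[intro]: "x ^ q + (x::'a) \<in> sub"
  by (simp add: sub_iff fq add.commute)

lemma card_sub: "card sub = q"
proof (rule antisym)
  have "sub = {x::'a. x ^ q + x = 0}" by (auto simp: sub_iff add_eq0)
  thus "card sub \<le> q" using card_roots_pow_le[of q "0::'a"] q16 by simp
next
  have fin: "finite sub" by simp
  have "UNIV = (\<Union>c\<in>sub. {x::'a. x ^ q + x = c})" by auto
  hence "q * q = card (\<Union>c\<in>sub. {x::'a. x ^ q + x = c})" using cardq by simp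
  also have "\<dots> \<le> (\<Sum>c\<in>sub. card {x::'a. x ^ q + x = c})" by (rule card_UN_le[OF fin])
  also have "\<dots> \<le> (\<Sum>c\<in>sub. q)" 
    by (rule sum_mono, rule card_roots_pow_le) (use q16 in simp)
  also have "\<dots> = card sub * q" by simp
  finally show "q \<le> card sub" using q16 by simp
qed

lemma card_PG1: "card (PG1 q :: 'a option set) = q + 1"
  unfolding PG1_def by (simp add: card_image card_sub)

end

lemma pow4_iter: "(x::'a::field) ^ 4 = x \<Longrightarrow> x ^ (4 ^ k) = x"
proof (induction k)
  case 0 then show ?case by simp
next
  case (Suc k)
  have "x ^ (4 ^ Suc k) = (x ^ (4 ^ k)) ^ 4" by (simp add: power_mult[symmetric] mult.commute)
  thus ?case using Suc by simp
qed

lemma e1: "(x::'a::comm_ring_1) * (x + 1) * (x ^ 2 + x + 1) = x ^ 4 + 2 * x ^ 3 + 2 * x^2 + x"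
  by (simp add: algebra_simps eval_nat_numeral)

context gf begin

lemma three[simp]: "(3::'a) = 1"
proof -
  have "(3::'a) = 2 + 1" by (simp del: two)
  also have "\<dots> = 1" by (simp only: two add_0)
  finally show ?thesis .
qed

lemma q_4pow: "q = 4 ^ (m div 2)"
proof -
  have "m = 2 * (m div 2)" using evm by simp
  hence "(2::nat) ^ m = 2 ^ (2 * (m div 2))" by metis
  thus ?thesis by (simp add: power_mult)
qed

lemma sub4_sub: "(x::'a) ^ 4 = x \<Longrightarrow> x \<in> sub"
proof -
  assume "x ^ 4 = x"
  hence "x ^ (4 ^ (m div 2)) = x" by (rule pow4_iter)
  hence "x ^ q = x" by (subst q_4pow)
  thus ?thesis by (simp only: sub_iff)
qed

lemma exists_w: "\<exists>w::'a. w ^ 2 + w + 1 = 0"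
proof -
  define n where "n = (q * q - 1) div 3"
  have qq4: "q * q = 4 ^ m" by (simp add: power_mult_distrib[symmetric])
  have d3: "3 dvd q * q - 1" using three_dvd[of m] qq4 by simp
  have qbig: "q * q \<ge> 256" using q16 mult_le_mono[OF q16 q16] by simp
  have n1: "n \<ge> 1" unfolding n_def using qbig by simp
  have "\<exists>x::'a. x \<noteq> 0 \<and> x ^ n \<noteq> 1"
  proof (rule ccontr)
    assume "\<not> ?thesis"
    hence "UNIV - {0} \<subseteq> {x::'a. x ^ n = 1}" by auto
    hence "card (UNIV - {0::'a}) \<le> card {x::'a. x ^ n = 1}" by (intro card_mono) auto
    also have "\<dots> \<le> n" using card_roots_one_le n1 by blast
    finally have "q * q - 1 \<le> n" using cardq by (simp add: card_Diff_singleton)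
    thus False unfolding n_def using qbig by simp
  qed
  then obtain x :: 'a where x: "x \<noteq> 0" "x ^ n \<noteq> 1" by blast
  define w where "w = x ^ n"
  obtain k where k: "q * q = Suc k" using qbig not0_implies_Suc[of "q*q"] by auto
  have "x ^ (q * q - 1) * x = x" using QQ[of x] unfolding k by (simp add: power_Suc2)
  hence x1: "x ^ (q * q - 1) = 1" using x(1) by simp
  have "w ^ 3 = x ^ (3 * n)" unfolding w_def by (simp add: power_mult mult.commute)
  also have "3 * n = q * q - 1" unfolding n_def using d3 by simp
  finally have w3: "w ^ 3 = 1" using x1 by simp
  have "(w - 1) * (w ^ 2 + w + 1) = w ^ 3 - 1" by (simp add: algebra_simps power2_eq_square power3_eq_cube)
  hence "(w - 1) * (w ^ 2 + w + 1) = 0" using w3 by (simp del: minus_eq)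
  moreover have "w - 1 \<noteq> 0" using x(2) w_def by (simp del: minus_eq)
  ultimately show ?thesis by auto
qed

lemma sub4_card: "card (subfield_of 4 :: 'a set) = 4"
proof -
  obtain w :: 'a where w: "w ^ 2 + w + 1 = 0" using exists_w by blast
  have w21: "w ^ 2 + w = 1" using w add_eq0[of "w^2+w" 1] by (simp add: add.assoc)
  have w3: "w ^ 3 = 1"
  proof -
    have "w ^ 3 = w * (w ^ 2 + w) + w ^ 2" by (simp add: algebra_simps power2_eq_square power3_eq_cube)
    also have "\<dots> = w + w ^ 2" using w21 by simp
    finally show ?thesis using w21 by (simp add: add.commute)
  qed
  have fac: "x ^ 4 + x = x * (x + 1) * (x + w) * (x + w ^ 2)" for x :: 'a
  proof -
    have "(x + w) * (x + w ^ 2) = x ^ 2 + (w ^ 2 + w) * x + w ^ 3"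
      by (simp add: algebra_simps power2_eq_square power3_eq_cube)
    also have "\<dots> = x ^ 2 + x + 1" using w21 w3 by simp
    finally have e: "(x + w) * (x + w ^ 2) = x ^ 2 + x + 1" .
    have "x * (x + 1) * (x ^ 2 + x + 1) = x ^ 4 + x" using e1[of x] by simp
    thus ?thesis using e by (simp add: mult.assoc)
  qed
  have "subfield_of 4 = {0, 1, w, w ^ 2}"
  proof -
    have "x ^ 4 = x \<longleftrightarrow> x = 0 \<or> x = 1 \<or> x = w \<or> x = w ^ 2" for x :: 'a
    proof -
      have "x ^ 4 = x \<longleftrightarrow> x ^ 4 + x = 0" by (rule add_eq0[symmetric])
      also have "\<dots> \<longleftrightarrow> x * (x + 1) * (x + w) * (x + w ^ 2) = 0" by (simp only: fac)
      also have "\<dots> \<longleftrightarrow> x = 0 \<or> x = 1 \<or> x = w \<or> x = w ^ 2" by (simp only: mult_eq_0_iff add_eq0 disj_assoc)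
      finally show ?thesis .
    qed
    thus ?thesis by (auto simp: subfield_of_def)
  qed
  moreover have "w \<noteq> 0" using w3 by auto
  moreover have "w \<noteq> 1"
  proof
    assume "w = 1"
    with w have "(1::'a) + 1 + 1 = 0" by simp
    thus False by simp
  qed
  moreover have "w ^ 2 \<noteq> 1" using w3 \<open>w \<noteq> 1\<close> by (metis power2_eq_square power3_eq_cube mult_1_left)
  moreover have "w ^ 2 \<noteq> w" using \<open>w \<noteq> 0\<close> \<open>w \<noteq> 1\<close> by (simp add: power2_eq_square)
  moreover have "w ^ 2 \<noteq> 0" using \<open>w \<noteq> 0\<close> by simp
  ultimately show ?thesis by simp
qed

lemma card_PG1_4: "card (PG1 4 :: 'a option set) = 5"
proof -
  have "finite (subfield_of 4 :: 'a set)" by simp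
  thus ?thesis unfolding PG1_def using sub4_card by (simp add: card_image)
qed

lemma PG1_4_sub: "(PG1 4 :: 'a option set) \<subseteq> PG1 q"
  unfolding PG1_def using sub4_sub by (auto simp: subfield_of_def)

end

context gf begin

definition inF :: "'a \<times> 'a \<times> 'a \<times> 'a \<Rightarrow> bool" where
  "inF F = (F \<in> sub \<times> sub \<times> sub \<times> sub)"

definition Zq :: "'a \<times> 'a \<times> 'a \<times> 'a \<Rightarrow> 'a option set" where
  "Zq F = {p \<in> PG1 q. vanish F p}"

definition Sb :: "'a option set set" where
  "Sb = {Zq F | F. inF F \<and> card (Zq F) = 5}"

lemma pgl2_det: "g \<in> pgl2 q \<Longrightarrow> det g \<noteq> (0::'a)"
  by (cases g) (simp add: pgl2_def del: minus_eq)

lemma pgl2_ginv: "g \<in> pgl2 q \<Longrightarrow> ginv (g::'a \<times> 'a \<times> 'a \<times> 'a) \<in> pgl2 q"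
  by (cases g) (auto simp: pgl2_def mult.commute)

lemma moeb_PG: 
  assumes "g \<in> pgl2 q" "p \<in> PG1 q"
  shows "moebius (g::'a \<times> 'a \<times> 'a \<times> 'a) p \<in> PG1 q"
proof -
  obtain a b c d where g: "g = (a,b,c,d)" by (cases g) auto
  have s: "a \<in> sub" "b \<in> sub" "c \<in> sub" "d \<in> sub" using assms(1) g by (auto simp: pgl2_def)
  show ?thesis
  proof (cases p)
    case None then show ?thesis using g s by (auto simp: PG1_def)
  next
    case (Some z)
    then have "z \<in> sub" using assms(2) by (auto simp: PG1_def)
    then show ?thesis using g s Some by (auto simp: PG1_def)
  qed
qed

lemma moeb_bij:
  assumes "g \<in> pgl2 q"
  shows "bij_betw (moebius (g::'a \<times> 'a \<times> 'a \<times> 'a)) (PG1 q) (PG1 q)"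
proof -
  have d: "det g \<noteq> 0" using pgl2_det assms by blast
  have gi: "ginv g \<in> pgl2 q" using pgl2_ginv assms by blast
  show ?thesis
    by (rule bij_betw_byWitness[where f'="moebius (ginv g)"])
       (auto simp: moebius_inv[OF d] moebius_inv2[OF d] intro: moeb_PG[OF assms] moeb_PG[OF gi])
qed

lemma Zq_moeb:
  assumes "g \<in> pgl2 q"
  shows "moebius g ` Zq (cmpF F g) = Zq F"
proof -
  have d: "det g \<noteq> 0" using pgl2_det assms by blast
  show ?thesis
  proof
    show "moebius g ` Zq (cmpF F g) \<subseteq> Zq F"
      using moeb_PG[OF assms] vanish_moebius[OF two d, of F] by (auto simp: Zq_def)
  next
    show "Zq F \<subseteq> moebius g ` Zq (cmpF F g)"
    proof
      fix p assume p: "p \<in> Zq F"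
      let ?p' = "moebius (ginv g) p"
      have "?p' \<in> PG1 q" using p moeb_PG[OF pgl2_ginv[OF assms]] by (auto simp: Zq_def)
      moreover have "moebius g ?p' = p" using moebius_inv[OF d] .
      moreover have "vanish (cmpF F g) ?p'" using vanish_moebius[OF two d, of F ?p'] p
        by (simp add: Zq_def moebius_inv[OF d])
      ultimately show "p \<in> moebius g ` Zq (cmpF F g)" unfolding Zq_def by (metis (mono_tags, lifting) image_eqI mem_Collect_eq)
    qed
  qed
qed

lemma cmpF_in:
  assumes "inF F" "g \<in> pgl2 q"
  shows "inF (cmpF F g)"
proof -
  obtain A B C D where F: "F = (A,B,C,D)" by (cases F) auto
  obtain a b c d where g: "g = (a,b,c,d)" by (cases g) auto
  have s: "a \<in> sub" "b \<in> sub" "c \<in> sub" "d \<in> sub" using assms(2) g by (auto simp: pgl2_def)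
  have t: "A \<in> sub" "B \<in> sub" "C \<in> sub" "D \<in> sub" using assms(1) F by (auto simp: inF_def)
  show ?thesis unfolding F g inF_def using s t by (simp add: sub_add sub_mult sub_pow)
qed

abbreviation "G0 \<equiv> (0::'a, 1::'a, 1::'a, 0::'a)"

lemma Zq_G0: "Zq G0 = PG1 4"
proof -
  have "p \<in> PG1 q \<and> vanish G0 p \<longleftrightarrow> p \<in> PG1 4" for p
  proof (cases p)
    case None then show ?thesis by (simp add: PG1_def vanish_def)
  next
    case (Some x)
    have "vanish G0 p \<longleftrightarrow> x ^ 4 = x" using Some by (simp add: vanish_def add_eq0)
    moreover have "x ^ 4 = x \<Longrightarrow> x \<in> sub" by (rule sub4_sub)
    ultimately show ?thesis using Some by (auto simp: PG1_def subfield_of_def)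
  qed
  thus ?thesis unfolding Zq_def by auto
qed

lemma witt_sub: "witt_blocks q \<subseteq> Sb"
proof
  fix X :: "'a option set" assume "X \<in> witt_blocks q"
  then obtain g where g: "g \<in> pgl2 q" and X: "X = moebius g ` PG1 4" by (auto simp: witt_blocks_def)
  have d: "det g \<noteq> 0" using pgl2_det g by blast
  define F where "F = cmpF G0 (ginv g)"
  have inF: "inF F" unfolding F_def by (rule cmpF_in) (use pgl2_ginv[OF g] in \<open>auto simp: inF_def\<close>)
  have "vanish (cmpF F g) p \<longleftrightarrow> vanish G0 p" for p
  proof -
    have "Hf (cmpF F g) (rep p) = Hf G0 (act (ginv g) (act g (rep p)))"
      unfolding F_def by (simp add: H_comp[OF two])
    also have "\<dots> = det g ^ 5 * Hf G0 (rep p)" by (simp add: act_ginv2 Hf_sc)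
    finally show ?thesis using d by (simp add: vanish_def)
  qed
  hence "Zq (cmpF F g) = Zq G0" by (simp add: Zq_def)
  hence XZ: "X = Zq F" using Zq_moeb[OF g, of F] X Zq_G0 by simp
  have "inj_on (moebius g) (PG1 4)"
    using bij_betw_imp_inj_on[OF moeb_bij[OF g]] PG1_4_sub inj_on_subset by blast
  hence "card X = 5" using X card_PG1_4 by (simp add: card_image)
  thus "X \<in> Sb" using XZ inF unfolding Sb_def by blast
qed

end

lemma cramer:
  fixes v1 v2 v3 :: "'a::field \<times> 'a"
  assumes "dl v1 v2 \<noteq> 0"
  shows "fst v3 = dl v3 v2 / dl v1 v2 * fst v1 + dl v1 v3 / dl v1 v2 * fst v2"
    and "snd v3 = dl v3 v2 / dl v1 v2 * snd v1 + dl v1 v3 / dl v1 v2 * snd v2"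
proof -
  have h1: "fst v3 * dl v1 v2 = dl v3 v2 * fst v1 + dl v1 v3 * fst v2" by (simp add: dl_def algebra_simps)
  have h2: "snd v3 * dl v1 v2 = dl v3 v2 * snd v1 + dl v1 v3 * snd v2" by (simp add: dl_def algebra_simps)
  show "fst v3 = dl v3 v2 / dl v1 v2 * fst v1 + dl v1 v3 / dl v1 v2 * fst v2"
    using h1 assms by (simp add: eq_divide_eq add_divide_distrib[symmetric] divide_eq_eq)
  show "snd v3 = dl v3 v2 / dl v1 v2 * snd v1 + dl v1 v3 / dl v1 v2 * snd v2"
    using h2 assms by (simp add: eq_divide_eq add_divide_distrib[symmetric] divide_eq_eq)
qed

lemma Hf_zero[simp]: "Hf (0,0,0,0) v = 0" by (cases v) simp

context gf begin

lemma rep_sub: "p \<in> PG1 q \<Longrightarrow> fst (rep p) \<in> sub \<and> snd (rep p) \<in> sub"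
  by (cases p) (auto simp: PG1_def)

lemma three_trans:
  assumes p: "p1 \<in> PG1 q" "p2 \<in> PG1 q" "p3 \<in> PG1 q" and ne: "p1 \<noteq> p2" "p1 \<noteq> p3" "p2 \<noteq> p3"
  shows "\<exists>g. g \<in> pgl2 q \<and> moebius g None = p3 \<and> moebius g (Some 0) = (p1::'a option) \<and> moebius g (Some 1) = p2"
proof -
  define v1 where "v1 = rep p1"
  define v2 where "v2 = rep p2"
  define v3 where "v3 = rep p3"
  have D: "dl v1 v2 \<noteq> 0" using ne dl_rep unfolding v1_def v2_def by blast
  have D32: "dl v3 v2 \<noteq> 0" using ne dl_rep unfolding v3_def v2_def by metis
  have D13: "dl v1 v3 \<noteq> 0" using ne dl_rep unfolding v1_def v3_def by blast
  define al where "al = dl v3 v2 / dl v1 v2"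
  define be where "be = dl v1 v3 / dl v1 v2"
  have al0: "al \<noteq> 0" using D D32 by (simp add: al_def)
  have be0: "be \<noteq> 0" using D D13 by (simp add: be_def)
  have c1: "fst v3 = al * fst v1 + be * fst v2" and c2: "snd v3 = al * snd v1 + be * snd v2"
    using cramer[OF D, of v3] by (simp_all add: al_def be_def)
  define g where "g = (fst v3, al * fst v1, snd v3, al * snd v1)"
  have s: "fst v1 \<in> sub" "snd v1 \<in> sub" "fst v2 \<in> sub" "snd v2 \<in> sub" "fst v3 \<in> sub" "snd v3 \<in> sub"
    using rep_sub p unfolding v1_def v2_def v3_def by auto
  have sd: "dl v1 v2 \<in> sub" "dl v3 v2 \<in> sub" "dl v1 v3 \<in> sub" using s by (auto simp: dl_def)
  have sal: "al \<in> sub" using sd by (auto simp: al_def)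
  have "det g = al * dl v1 v3" by (simp add: g_def dl_def algebra_simps)
  hence dg: "det g \<noteq> 0" using al0 D13 by simp
  have gp: "g \<in> pgl2 q" using s sal dg by (auto simp: g_def pgl2_def)
  have m1: "moebius g None = p3"
    by (simp add: moebius_rep g_def v3_def[symmetric] del: moebius.simps) (simp add: v3_def)
  have "act g (rep (Some 0)) = sc al v1" by (simp add: g_def sc_def)
  hence m2: "moebius g (Some 0) = p1" using al0 by (simp add: moebius_rep pt_sc v1_def del: moebius.simps)
  have "act g (rep (Some 1)) = sc be v2" using c1 c2 by (simp add: g_def sc_def)
  hence m3: "moebius g (Some 1) = p2" using be0 by (simp add: moebius_rep pt_sc v2_def del: moebius.simps)
  show ?thesis using gp m1 m2 m3 by blast
qed

lemma card5_three:
  assumes "card (X :: 'a option set) = 5"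
  shows "\<exists>p1 p2 p3. p1 \<in> X \<and> p2 \<in> X \<and> p3 \<in> X \<and> p1 \<noteq> p2 \<and> p1 \<noteq> p3 \<and> p2 \<noteq> p3"
proof -
  have "3 \<le> card X" using assms by simp
  then obtain Y where "Y \<subseteq> X" "card Y = 3" by (meson obtain_subset_with_card_n)
  then show ?thesis by (auto simp: card_Suc_eq numeral_3_eq_3)
qed

lemma Sb_sub: "Sb \<subseteq> witt_blocks q"
proof
  fix X :: "'a option set" assume "X \<in> Sb"
  then obtain F where F: "inF F" "card (Zq F) = 5" and X: "X = Zq F" by (auto simp: Sb_def)
  obtain p1 p2 p3 where pp: "p1 \<in> Zq F" "p2 \<in> Zq F" "p3 \<in> Zq F" "p1 \<noteq> p2" "p1 \<noteq> p3" "p2 \<noteq> p3"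
    using card5_three[OF F(2)] by blast
  have "p1 \<in> PG1 q" "p2 \<in> PG1 q" "p3 \<in> PG1 q" using pp by (auto simp: Zq_def)
  then obtain g where g: "g \<in> pgl2 q" "moebius g None = p3" "moebius g (Some 0) = p1" "moebius g (Some 1) = p2"
    using three_trans[OF _ _ _ pp(4-6)] by blast
  have d: "det g \<noteq> 0" using pgl2_det g by blast
  obtain A B C D where FG: "cmpF F g = (A,B,C,D)" by (cases "cmpF F g") auto
  have v: "vanish (cmpF F g) p" if "p \<in> {None, Some 0, Some 1}" for p
  proof -
    have "moebius g p \<in> Zq F" using that g pp by auto
    thus ?thesis using vanish_moebius[OF two d, of F p] by (simp add: Zq_def)
  qed
  have A: "A = 0" using v[of None] FG by (simp add: vanish_def)
  have Dz: "D = 0" using v[of "Some 0"] FG by (simp add: vanish_def)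
  have "A + B + C + D = 0" using v[of "Some 1"] FG by (simp add: vanish_def)
  hence BC: "C = B" using A Dz by (simp add: add_eq0)
  show "X \<in> witt_blocks q"
  proof (cases "B = 0")
    case True
    hence "Zq (cmpF F g) = PG1 q" using FG A Dz BC by (auto simp: Zq_def vanish_def)
    hence "Zq F = PG1 q" using Zq_moeb[OF g(1), of F] bij_betw_imp_surj_on[OF moeb_bij[OF g(1)]] by simp
    hence "card (Zq F) = q + 1" using card_PG1 by simp
    thus ?thesis using F(2) q16 by simp
  next
    case False
    have "vanish (cmpF F g) p \<longleftrightarrow> vanish G0 p" for p
    proof -
      have "Hf (cmpF F g) (rep p) = B * Hf G0 (rep p)" using FG A Dz BC
        by (cases p) (simp_all add: algebra_simps)
      thus ?thesis using False by (simp add: vanish_def)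
    qed
    hence "Zq (cmpF F g) = PG1 4" using Zq_G0 by (simp add: Zq_def)
    hence "X = moebius g ` PG1 4" using Zq_moeb[OF g(1), of F] X by simp
    thus ?thesis using g(1) unfolding witt_blocks_def by blast
  qed
qed

lemma witt_eq: "witt_blocks q = Sb"
  using witt_sub Sb_sub by blast

end

lemma cross_gen:
  fixes a b u v :: "'a::field"
  assumes "(a*u+b)*(v+1) = (a*v+b)*(u+1)"
  shows "(a - b)*(u - v) = 0"
proof -
  have "(a - b)*(u - v) = (a*u+b)*(v+1) - (a*v+b)*(u+1)" by (simp add: algebra_simps)
  thus ?thesis using assms by simp
qed

lemma frac_gen:
  fixes a b u :: "'a::field"
  assumes "u \<noteq> 0" "1 + u \<noteq> 0"
  shows "(a * (1/u) + b) / (1/u + 1) = (b * u + a) / (u + 1)"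
proof -
  have e1: "a * (1/u) + b = (b * u + a) / u" using assms by (simp add: field_simps)
  have e2: "1/u + 1 = (u + 1) / u" using assms by (simp add: field_simps)
  show ?thesis unfolding e1 e2 using assms by simp
qed

context gf begin

abbreviation U where "U \<equiv> (Uroots q :: 'a set)"

definition fmap :: "'a \<Rightarrow> 'a option" where
  "fmap u = pt (om ^ q * u + om, u + 1)"

lemma plus_self2[simp]: "(x::'a) + (x + y) = y"
  by (simp add: add.assoc[symmetric])

lemma om_sum: "om ^ q + om \<noteq> 0"
  using om add_eq0 by auto

lemma om_qq[simp]: "(om ^ q) ^ q = om" by simp

lemma U_iff: "u \<in> U \<longleftrightarrow> u ^ q * u = 1"
  by (simp add: Uroots_def power_Suc2 mult.commute)

lemma U_nz: "u \<in> U \<Longrightarrow> u \<noteq> 0"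
  using U_iff q16 by auto

lemma U_q: "u \<in> U \<Longrightarrow> u ^ q = 1 / u"
  using U_iff U_nz by (simp add: eq_divide_eq)

lemma fv_nz: "(om ^ q * u + om, u + 1) \<noteq> (0, 0)"
proof
  assume h: "(om ^ q * u + om, u + 1) = (0, 0)"
  hence "u = 1" by (simp add: add_eq0)
  thus False using h om_sum by simp
qed

lemma fmap_1: "fmap 1 = None" by (simp add: fmap_def pt_def)

lemma fmap_ne1: "u \<noteq> 1 \<Longrightarrow> fmap u = Some ((om ^ q * u + om) / (u + 1))"
  by (simp add: fmap_def pt_def add_eq0)

lemma fmap_None: "fmap v = None \<longleftrightarrow> v = 1"
  by (simp add: fmap_def pt_def add_eq0)

lemma one_U: "1 \<in> U" by (simp add: U_iff)

lemma fmap_into: "u \<in> U \<Longrightarrow> fmap u \<in> PG1 q"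
proof (cases "u = 1")
  case True then show ?thesis by (simp add: fmap_1 PG1_def)
next
  case False
  assume uU: "u \<in> U"
  have u0: "u \<noteq> 0" using U_nz uU .
  have u1: "u + 1 \<noteq> 0" using False by (simp add: add_eq0)
  have u1': "1 + u \<noteq> 0" using u1 by (simp add: add.commute)
  have "((om ^ q * u + om) / (u + 1)) ^ q = (om * (1/u) + om ^ q) / (1/u + 1)"
    by (simp add: power_divide fq power_mult_distrib U_q[OF uU])
  also have "\<dots> = (om ^ q * u + om) / (u + 1)"
    using frac_gen[OF u0 u1'] by simp
  finally have "(om ^ q * u + om) / (u + 1) \<in> sub" by (simp add: sub_iff)
  thus ?thesis using False by (simp add: fmap_ne1 PG1_def)
qed

lemma fmap_inj: "inj_on fmap U"
proof
  fix u v assume uv: "u \<in> U" "v \<in> U" "fmap u = fmap v"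
  show "u = v"
  proof (cases "u = 1 \<or> v = 1")
    case True then show ?thesis using uv fmap_None by metis
  next
    case False
    hence u1: "u + 1 \<noteq> 0" "v + 1 \<noteq> 0" by (auto simp: add_eq0)
    have "(om ^ q * u + om) / (u + 1) = (om ^ q * v + om) / (v + 1)"
      using uv(3) False by (simp add: fmap_ne1)
    hence "(om ^ q * u + om) * (v + 1) = (om ^ q * v + om) * (u + 1)"
      using u1 by (simp add: divide_eq_eq eq_divide_eq)
    hence "(om ^ q - om) * (u - v) = 0" by (rule cross_gen)
    hence "(om ^ q + om) * (u + v) = 0" by simp
    thus ?thesis using om_sum by (simp add: add_eq0)
  qed
qed

lemma fmap_surj: "PG1 q \<subseteq> fmap ` U"
proof
  fix p :: "'a option" assume p: "p \<in> PG1 q"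
  show "p \<in> fmap ` U"
  proof (cases p)
    case None then show ?thesis using fmap_1 one_U by (metis image_eqI)
  next
    case (Some x)
    have x: "x ^ q = x" using p Some by (auto simp: PG1_def sub_iff)
    have n1: "x + om ^ q \<noteq> 0"
    proof
      assume "x + om ^ q = 0"
      hence "x = om ^ q" by (simp add: add_eq0)
      hence "x ^ q = om" by simp
      thus False using x om \<open>x = om ^ q\<close> by simp
    qed
    have n2: "x + om \<noteq> 0"
    proof
      assume "x + om = 0"
      hence "x = om" by (simp add: add_eq0)
      thus False using x om by simp
    qed
    define u where "u = (x + om) / (x + om ^ q)"
    have uq: "u ^ q = (x + om ^ q) / (x + om)" unfolding u_def
      by (simp add: power_divide fq x)
    have uU: "u \<in> U" unfolding U_iff uq using n1 n2 by (simp add: u_def)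
    have "u + 1 = (om + om ^ q) / (x + om ^ q)" using n1 unfolding u_def
      by (simp add: field_simps)
    hence u1: "u + 1 \<noteq> 0" using n1 om_sum by (simp add: add.commute)
    hence un1: "u \<noteq> 1" by auto
    have "(om ^ q * u + om, u + 1) = sc (1 / (x + om ^ q)) ((om ^ q + om) * x, om ^ q + om)"
      using n1 unfolding u_def sc_def by (simp add: field_simps)
    hence "fmap u = pt ((om ^ q + om) * x, om ^ q + om)"
      using n1 by (simp add: fmap_def pt_sc)
    also have "\<dots> = Some x" using om_sum by (simp add: pt_def)
    finally show ?thesis using uU Some by (metis image_eqI)
  qed
qed

lemma fmap_bij: "bij_betw fmap U (PG1 q)"
  unfolding bij_betw_def using fmap_inj fmap_into fmap_surj by blast

lemma card_U: "card U = q + 1"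
  using bij_betw_same_card[OF fmap_bij] card_PG1 by simp

end

lemma K2_gen:
  fixes g b b' g' r r' X Y :: "'a::field"
  assumes "(2::'a) = 0"
  shows "Hf (g + b + b' + g', g*r + b*r' + b'*r + g'*r', g*r^4 + b*r^4 + b'*r'^4 + g'*r'^4,
             g*r^5 + b*r^4*r' + b'*r*r'^4 + g'*r'^5) (X, Y)
         = Hf (g, b, b', g') (X + r*Y, X + r'*Y)"
  apply (simp only: Hf.simps p5 fr4[OF assms] power_mult_distrib)
  by (simp add: algebra_simps)

lemma K3_gen:
  fixes A B C D r r' X Y :: "'a::field"
  assumes "(2::'a) = 0"
  shows "Hf (A, B, C, D) (r'*X + r*Y, X + Y) =
         Hf (A*r'^5 + B*r'^4 + C*r' + D, A*r'^4*r + B*r'^4 + C*r + D,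
             A*r^4*r' + B*r^4 + C*r' + D, A*r^5 + B*r^4 + C*r + D) (X, Y)"
  apply (simp only: Hf.simps p5 fr4[OF assms] power_mult_distrib)
  by (simp add: algebra_simps)

context gf begin

definition Gp :: "'a \<Rightarrow> 'a \<Rightarrow> 'a \<Rightarrow> 'a" where
  "Gp b g u = Hf (g, b, b ^ q, g ^ q) (u, 1)"

definition Gset :: "'a \<Rightarrow> 'a \<Rightarrow> 'a set" where
  "Gset b g = {u \<in> U. Gp b g u = 0}"

definition FofG :: "'a \<Rightarrow> 'a \<Rightarrow> 'a \<times> 'a \<times> 'a \<times> 'a" where
  "FofG b g = (g + b + b^q + g^q, g*om + b*om^q + b^q*om + g^q*om^q,
     g*om^4 + b*om^4 + b^q*(om^q)^4 + g^q*(om^q)^4,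
     g*om^5 + b*om^4*om^q + b^q*om*(om^q)^4 + g^q*(om^q)^5)"

lemma pc4: "((x::'a) ^ 4) ^ q = (x ^ q) ^ 4" by (rule pow_comm)
lemma pc5: "((x::'a) ^ 5) ^ q = (x ^ q) ^ 5" by (rule pow_comm)

lemma FofG_in: "inF (FofG b g)"
  unfolding inF_def FofG_def
  by (simp add: sub_iff fq power_mult_distrib pc4 pc5 ac_simps)

lemma vanish_FofG:
  assumes "u \<in> U"
  shows "vanish (FofG b g) (fmap u) \<longleftrightarrow> Gp b g u = 0"
proof -
  have "vanish (FofG b g) (fmap u) \<longleftrightarrow> Hf (FofG b g) (om ^ q * u + om, u + 1) = 0"
    unfolding fmap_def by (rule vanish_pt[OF fv_nz])
  also have "Hf (FofG b g) (om ^ q * u + om, u + 1) =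
      Hf (g, b, b^q, g^q) ((om ^ q * u + om) + om * (u + 1), (om ^ q * u + om) + om ^ q * (u + 1))"
    unfolding FofG_def by (rule K2_gen[OF two])
  also have "((om ^ q * u + om) + om * (u + 1), (om ^ q * u + om) + om ^ q * (u + 1)) = sc (om ^ q + om) (u, 1)"
    by (simp add: sc_def algebra_simps)
  finally show ?thesis using om_sum by (simp add: Hf_sc Gp_def)
qed

definition bF :: "'a \<times> 'a \<times> 'a \<times> 'a \<Rightarrow> 'a" where
  "bF F = (case F of (A, B, C, D) \<Rightarrow> A*(om^q)^4*om + B*(om^q)^4 + C*om + D)"

definition gF :: "'a \<times> 'a \<times> 'a \<times> 'a \<Rightarrow> 'a" where
  "gF F = (case F of (A, B, C, D) \<Rightarrow> A*(om^q)^5 + B*(om^q)^4 + C*om^q + D)"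

lemma vanish_GofF:
  assumes F: "inF F" and u: "u \<in> U"
  shows "Gp (bF F) (gF F) u = 0 \<longleftrightarrow> vanish F (fmap u)"
proof -
  obtain A B C D where FF: "F = (A,B,C,D)" by (cases F) auto
  have s: "A ^ q = A" "B ^ q = B" "C ^ q = C" "D ^ q = D" using F FF by (auto simp: inF_def sub_iff)
  have bq: "bF F ^ q = A*om^4*om^q + B*om^4 + C*om^q + D"
    unfolding FF bF_def by (simp add: fq power_mult_distrib s pc4)
  have gq: "gF F ^ q = A*om^5 + B*om^4 + C*om + D"
    unfolding FF gF_def by (simp add: fq power_mult_distrib s pc4 pc5)
  have "Gp (bF F) (gF F) u = Hf (A, B, C, D) (om^q * u + om * 1, u + 1)"
    unfolding Gp_def bq gq K3_gen[OF two] by (simp add: FF bF_def gF_def)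
  also have "\<dots> = 0 \<longleftrightarrow> vanish F (fmap u)"
    unfolding fmap_def using vanish_pt[OF fv_nz, of F u] FF by simp
  finally show ?thesis .
qed

lemma img_match:
  assumes "\<And>u. u \<in> U \<Longrightarrow> P u \<longleftrightarrow> Q (fmap u)"
  shows "fmap ` {u \<in> U. P u} = {p \<in> PG1 q. Q p}"
proof
  show "fmap ` {u \<in> U. P u} \<subseteq> {p \<in> PG1 q. Q p}" using assms fmap_into by auto
next
  show "{p \<in> PG1 q. Q p} \<subseteq> fmap ` {u \<in> U. P u}"
  proof
    fix p assume p: "p \<in> {p \<in> PG1 q. Q p}"
    then obtain u where "u \<in> U" "p = fmap u" using fmap_surj by blast
    thus "p \<in> fmap ` {u \<in> U. P u}" using p assms by auto
  qed
qed

lemma img_Gset1: "fmap ` Gset b g = Zq (FofG b g)"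
  unfolding Gset_def Zq_def by (rule img_match) (simp add: vanish_FofG)

lemma img_Gset2: "inF F \<Longrightarrow> fmap ` Gset (bF F) (gF F) = Zq F"
  unfolding Gset_def Zq_def by (rule img_match) (simp add: vanish_GofF)

definition BG :: "'a set set" where
  "BG = {Gset b g | b g. card (Gset b g) = 5}"

lemma img_BG: "(\<lambda>X. fmap ` X) ` BG = Sb"
proof
  have inj: "\<And>X. X \<subseteq> U \<Longrightarrow> card (fmap ` X) = card X"
    using fmap_inj by (meson card_image inj_on_subset)
  show "(\<lambda>X. fmap ` X) ` BG \<subseteq> Sb"
  proof
    fix Y assume "Y \<in> (\<lambda>X. fmap ` X) ` BG"
    then obtain b g where Y: "Y = fmap ` Gset b g" and c: "card (Gset b g) = 5" by (auto simp: BG_def)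
    have "card Y = 5" using Y c inj[of "Gset b g"] by (simp add: Gset_def)
    moreover have "Y = Zq (FofG b g)" using Y img_Gset1 by simp
    ultimately show "Y \<in> Sb" unfolding Sb_def using FofG_in[of b g] by blast
  qed
next
  have inj: "\<And>X. X \<subseteq> U \<Longrightarrow> card (fmap ` X) = card X"
    using fmap_inj by (meson card_image inj_on_subset)
  show "Sb \<subseteq> (\<lambda>X. fmap ` X) ` BG"
  proof
    fix Y assume "Y \<in> Sb"
    then obtain F where F: "inF F" "card (Zq F) = 5" "Y = Zq F" by (auto simp: Sb_def)
    have e: "fmap ` Gset (bF F) (gF F) = Y" using img_Gset2[OF F(1)] F(3) by simp
    have "card (Gset (bF F) (gF F)) = 5" using e F inj[of "Gset (bF F) (gF F)"] by (simp add: Gset_def)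
    hence "Gset (bF F) (gF F) \<in> BG" unfolding BG_def by blast
    thus "Y \<in> (\<lambda>X. fmap ` X) ` BG" using e by blast
  qed
qed

end

lemma K_gen:
  fixes u :: "'a::field"
  shows "u \<noteq> 0 \<Longrightarrow> u^5*(a3*u^3 + aq2/u^3 + a5*u^5 + aq4/u^5 + (a3'/u^3 + aq2'*u^3 + a5'/u^5 + aq4'*u^5)) = (a3+aq2')*u^8 + (a3'+aq2)*u^2 + (a5+aq4')*u^10 + (a5'+aq4)"
  by (simp add: field_simps eval_nat_numeral)

context gf begin

definition sr :: "'a \<Rightarrow> 'a" where "sr x = x ^ (2 ^ (2 * m - 1))"

lemma two_pow: "(2::nat) ^ (2 * m - 1) * 2 = q * q"
proof -
  have "(2::nat) ^ (2 * m - 1) * 2 = 2 ^ Suc (2 * m - 1)" by simp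
  also have "Suc (2 * m - 1) = 2 * m" using m4 by simp
  finally show ?thesis by (simp add: power_mult power2_eq_square[symmetric] mult.commute)
qed

lemma sr_sq: "(sr x) ^ 2 = x"
proof -
  have "(sr x) ^ 2 = x ^ (2 ^ (2 * m - 1) * 2)" by (simp only: sr_def power_mult)
  also have "\<dots> = x ^ (q * q)" by (simp only: two_pow)
  finally show ?thesis by (simp add: QQ)
qed

lemma sr_of_sq: "sr (y ^ 2) = y"
proof -
  have "sr (y ^ 2) = y ^ (2 ^ (2 * m - 1) * 2)" by (simp only: sr_def power_mult[symmetric] mult.commute)
  also have "\<dots> = y ^ (q * q)" by (simp only: two_pow)
  finally show ?thesis by (simp add: QQ)
qed

lemma pc2: "((x::'a) ^ 2) ^ q = (x ^ q) ^ 2" by (rule pow_comm)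

lemma Gp_eq: "Gp b g u = g * u ^ 5 + b * u ^ 4 + b ^ q * u + g ^ q"
  by (simp add: Gp_def)

lemma sq_G: "(Gp b g u) ^ 2 = b^2 * u^8 + (b^2)^q * u^2 + g^2 * u^10 + (g^2)^q"
proof -
  have "(Gp b g u) ^ 2 = (g * u ^ 5)^2 + (b * u ^ 4)^2 + (b ^ q * u)^2 + (g ^ q)^2"
    by (simp add: Gp_eq frob2[OF two])
  also have "\<dots> = g^2 * (u^5)^2 + b^2 * (u^4)^2 + (b^2)^q * u^2 + (g^2)^q"
    by (simp add: power_mult_distrib pc2)
  also have "((u::'a)^5)^2 = u^10" by (simp flip: power_mult)
  also have "((u::'a)^4)^2 = u^8" by (simp flip: power_mult)
  finally show ?thesis by (simp add: ac_simps)
qed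

lemma U_pow:
  assumes u: "u \<in> U" and k: "k + 1 \<le> q"
  shows "u ^ (q - k) = 1 / u ^ (k + 1)"
proof -
  have u0: "u \<noteq> 0" using U_nz u .
  have e: "q - k + (k + 1) = q + 1" using k by simp
  have "u ^ (q - k) * u ^ (k + 1) = u ^ (q + 1)" by (simp only: power_add[symmetric] e)
  also have "\<dots> = 1" using u by (simp add: Uroots_def)
  finally show ?thesis using u0 by (simp add: eq_divide_eq)
qed

lemma code_val:
  assumes u: "u \<in> U"
  shows "u ^ 5 * trace q (a3 * u ^ 3 + aq2 * u ^ (q - 2) + a5 * u ^ 5 + aq4 * u ^ (q - 4))
         = (Gp (sr (a3 + aq2 ^ q)) (sr (a5 + aq4 ^ q)) u) ^ 2"
proof -
  have u0: "u \<noteq> 0" using U_nz u .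
  have p2: "u ^ (q - 2) = 1 / u ^ 3" using U_pow[OF u, of 2] q16 by simp
  have p4: "u ^ (q - 4) = 1 / u ^ 5" using U_pow[OF u, of 4] q16 by simp
  have uq: "u ^ q = 1 / u" using U_q[OF u] .
  define z where "z = a3 * u ^ 3 + aq2 / u ^ 3 + a5 * u ^ 5 + aq4 / u ^ 5"
  have h3: "(u ^ 3) ^ q = 1 / u ^ 3" using pow_comm[of u 3] uq by (simp add: power_one_over)
  have h5: "(u ^ 5) ^ q = 1 / u ^ 5" using pow_comm[of u 5] uq by (simp add: power_one_over)
  have zq: "z ^ q = a3 ^ q / u ^ 3 + aq2 ^ q * u ^ 3 + a5 ^ q / u ^ 5 + aq4 ^ q * u ^ 5"
    unfolding z_def by (simp add: fq power_mult_distrib power_divide h3 h5)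
  have "u ^ 5 * trace q (a3 * u ^ 3 + aq2 * u ^ (q - 2) + a5 * u ^ 5 + aq4 * u ^ (q - 4))
       = u ^ 5 * (z + z ^ q)" unfolding trace_def p2 p4 z_def by simp
  also have "\<dots> = (a3 + aq2 ^ q) * u ^ 8 + (a3 ^ q + aq2) * u ^ 2 + (a5 + aq4 ^ q) * u ^ 10 + (a5 ^ q + aq4)"
    unfolding zq unfolding z_def by (rule K_gen[OF u0])
  also have "\<dots> = (Gp (sr (a3 + aq2 ^ q)) (sr (a5 + aq4 ^ q)) u) ^ 2"
    by (simp add: sq_G sr_sq fq)
  finally show ?thesis .
qed

lemma code_zero:
  assumes u: "u \<in> U"
  shows "trace q (a3 * u ^ 3 + aq2 * u ^ (q - 2) + a5 * u ^ 5 + aq4 * u ^ (q - 4)) = 0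
         \<longleftrightarrow> Gp (sr (a3 + aq2 ^ q)) (sr (a5 + aq4 ^ q)) u = 0"
proof -
  have u0: "u \<noteq> 0" using U_nz u .
  have "trace q (a3 * u ^ 3 + aq2 * u ^ (q - 2) + a5 * u ^ 5 + aq4 * u ^ (q - 4)) = 0 \<longleftrightarrow>
        u ^ 5 * trace q (a3 * u ^ 3 + aq2 * u ^ (q - 2) + a5 * u ^ 5 + aq4 * u ^ (q - 4)) = 0"
    using u0 by simp
  also have "\<dots> \<longleftrightarrow> (Gp (sr (a3 + aq2 ^ q)) (sr (a5 + aq4 ^ q)) u) ^ 2 = 0"
    by (simp only: code_val[OF u])
  finally show ?thesis by simp
qed

lemma supp_compl: "U - supp_on U c = {u \<in> U. c u = 0}"
  by (auto simp: supp_on_def)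

lemma finU: "finite U" by simp

lemma blocks_eq: "{U - B | B. B \<in> blocks_w q (q - 4)} = BG"
proof
  show "{U - B | B. B \<in> blocks_w q (q - 4)} \<subseteq> BG"
  proof
    fix X assume "X \<in> {U - B | B. B \<in> blocks_w q (q - 4)}"
    then obtain c where X: "X = U - supp_on U c" and c: "c \<in> trace_code35 q"
      and cc: "card (supp_on U c) = q - 4" by (auto simp: blocks_w_def)
    obtain a3 aq2 a5 aq4 where ca: "c = (\<lambda>u. trace q (a3 * u ^ 3 + aq2 * u ^ (q - 2) + a5 * u ^ 5 + aq4 * u ^ (q - 4)))"
      using c by (auto simp: trace_code35_def)
    have cz: "\<And>u. u \<in> U \<Longrightarrow> c u = 0 \<longleftrightarrow> Gp (sr (a3 + aq2 ^ q)) (sr (a5 + aq4 ^ q)) u = 0"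
      unfolding ca by (rule code_zero)
    have XG: "X = Gset (sr (a3 + aq2 ^ q)) (sr (a5 + aq4 ^ q))"
      unfolding X supp_compl Gset_def using cz by blast
    have "supp_on U c \<subseteq> U" by (auto simp: supp_on_def)
    hence "card X = card U - card (supp_on U c)" unfolding X by (simp add: card_Diff_subset finite_subset)
    hence "card X = 5" using cc card_U q16 by simp
    thus "X \<in> BG" using XG unfolding BG_def by blast
  qed
next
  show "BG \<subseteq> {U - B | B. B \<in> blocks_w q (q - 4)}"
  proof
    fix X assume "X \<in> BG"
    then obtain b g where X: "X = Gset b g" and c5: "card (Gset b g) = 5" by (auto simp: BG_def)
    define c where "c = (\<lambda>u. trace q ((b^2) * u ^ 3 + 0 * u ^ (q - 2) + (g^2) * u ^ 5 + 0 * u ^ (q - 4)))"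
    have cin: "c \<in> trace_code35 q" unfolding c_def trace_code35_def by blast
    have z: "(0::'a) ^ q = 0" using q16 by simp
    have cz: "c u = 0 \<longleftrightarrow> Gp b g u = 0" if "u \<in> U" for u
    proof -
      have "c u = 0 \<longleftrightarrow> Gp (sr (b^2 + 0 ^ q)) (sr (g^2 + 0 ^ q)) u = 0"
        unfolding c_def by (rule code_zero[OF that])
      thus ?thesis by (simp only: z add_0_right sr_of_sq)
    qed
    have "U - supp_on U c = Gset b g"
      unfolding supp_compl Gset_def using cz by blast
    hence e: "U - supp_on U c = X" using X by simp
    have sub: "supp_on U c \<subseteq> U" by (auto simp: supp_on_def)
    have "supp_on U c = U - X" using e sub by blast
    moreover have "X \<subseteq> U" using X by (auto simp: Gset_def)
    ultimately have "card (supp_on U c) = q - 4" using c5 X card_U by (simp add: card_Diff_subset finite_subset)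
    hence "supp_on U c \<in> blocks_w q (q - 4)" using cin unfolding blocks_w_def by blast
    thus "X \<in> {U - B | B. B \<in> blocks_w q (q - 4)}" using e by blast
  qed
qed

lemma main: "inc_isomorphic U {U - B | B. B \<in> blocks_w q (q - 4)} (PG1 q :: 'a option set) (witt_blocks q)"
  unfolding inc_isomorphic_def blocks_eq witt_eq
  using fmap_bij img_BG by blast

end

lemma exists_om:
  assumes "card (UNIV :: 'a::{field,finite} set) = 2 ^ (2 * m)" "m \<ge> 4"
  shows "\<exists>om::'a. om ^ (2 ^ m) \<noteq> om"
proof (rule ccontr)
  assume "\<not> ?thesis"
  hence all: "\<And>x::'a. x ^ (2 ^ m) = x" by auto
  have two: "(2::'a) = 0" using char2_of_card[OF assms(1)] assms(2) by simp
  have "\<And>x::'a. x + x = 0" using two by (metis mult_2 mult_zero_left)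
  hence "UNIV = {x::'a. x ^ (2 ^ m) + x = 0}" using all by auto
  moreover have "(2::nat) \<le> 2 ^ m"
  proof -
    have "(2::nat) ^ 1 \<le> 2 ^ m" using assms(2) by (intro power_increasing) auto
    thus ?thesis by simp
  qed
  ultimately have "card (UNIV :: 'a set) \<le> 2 ^ m" using card_roots_pow_le[of "2^m" "0::'a"] by simp
  moreover have "(2::nat) ^ m < 2 ^ (2 * m)" using assms(2) by (intro power_strict_increasing) auto
  ultimately show False using assms(1) by simp
qed

theorem theorem26:
  fixes m :: nat
  assumes "card (UNIV :: 'a::{field,finite} set) = 2 ^ (2 * m)"
    and "even m" and "m \<ge> 4"
  shows "inc_isomorphic (Uroots (2 ^ m) :: 'a set)
           {Uroots (2 ^ m) - B | B. B \<in> blocks_w (2 ^ m) (2 ^ m - 4)}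
           (PG1 (2 ^ m) :: 'a option set) (witt_blocks (2 ^ m))"
proof -
  obtain om :: 'a where om: "om ^ (2 ^ m) \<noteq> om" using exists_om[OF assms(1) assms(3)] by blast
  interpret gf m om using assms om by unfold_locales auto
  show ?thesis using main .
qed

end
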